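(* Let $\mathcal H_A,\mathcal H_B$ be finite-dimensional Hilbert spaces, $|0_A\rangle\in\mathcal H_A$, $|0_B\rangle\in\mathcal H_B$ unit vectors, $|0\rangle=|0_A\rangle\otimes|0_B\rangle$, and let $|\phi\rangle\in\mathcal H_A\otimes\mathcal H_B$ be a unit vector. Decompose $|\phi\rangle=|x\rangle\otimes|0_B\rangle+|y\rangle$ with $|x\rangle=(\mathbb 1_A\otimes\langle 0_B|)|\phi\rangle$ and $(\mathbb 1_A\otimes\langle 0_B|)|y\rangle=0$, and assume $|y\rangle\neq0$. Fix $0<\epsilon<1$, let $|\psi\rangle=(|0\rangle+\epsilon|\phi\rangle)/\sqrt{\mathcal N}$ with $\mathcal N=1+\epsilon^2+2\epsilon\,\mathrm{Re}\langle0|\phi\rangle$, $\rho_A=\operatorname{tr}_B|\psi\rangle\langle\psi|$, $\mu=\epsilon^2\langle y|y\rangle/\mathcal N$ and $\omega=\operatorname{tr}_B|y\rangle\langle y|/\langle y|y\rangle$. Then $$\mu\,S_1(\omega)\le S_1(\rho_A)\le h_2(\mu)+\mu\,S_1(\omega),$$ where $h_2(x)=-x\log x-(1-x)\log(1-x)$.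
   Context: $S_1(\rho)=-\operatorname{tr}\rho\log\rho$ is the von Neumann entropy. One has $\rho_A=(1-\mu)|v\rangle\langle v|+\mu\,\omega$ with $|v\rangle=(|0_A\rangle+\epsilon|x\rangle)/\sqrt{\mathcal N(1-\mu)}$ a unit vector. *)

theory Defs
  imports "HOL-Analysis.Analysis" "HOL-Computational_Algebra.Polynomial"
begin

text \<open>Finite-dimensional Hilbert spaces are modelled as complex^'n for a finite index type 'n;
  the tensor product H_A \<otimes> H_B is complex^('a \<times> 'b).\<close>

definition braket :: "complex^'n::finite \<Rightarrow> complex^'n::finite \<Rightarrow> complex" where
  "braket u v = (\<Sum>i\<in>UNIV. cnj (u $ i) * v $ i)"

definition tens :: "complex^'a \<Rightarrow> complex^'b \<Rightarrow> complex^('a::finite \<times> 'b::finite)" where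
  "tens x y = (\<chi> p. x $ fst p * y $ snd p)"

definition outer :: "complex^'n::finite \<Rightarrow> complex^'n::finite \<Rightarrow> complex^'n::finite^'n" where
  "outer u v = (\<chi> i j. u $ i * cnj (v $ j))"

definition ptrB :: "complex^('a::finite \<times> 'b::finite)^('a::finite \<times> 'b::finite) \<Rightarrow> complex^'a^'a" where
  "ptrB M = (\<chi> i i'. \<Sum>j\<in>UNIV. M $ (i, j) $ (i', j))"

text \<open>(1_A \<otimes> <b|) applied to a vector of H_A \<otimes> H_B\<close>
definition contractB :: "complex^'b \<Rightarrow> complex^('a::finite \<times> 'b::finite) \<Rightarrow> complex^'a" where
  "contractB b v = (\<chi> i. \<Sum>j\<in>UNIV. cnj (b $ j) * v $ (i, j))"

definition charpoly :: "complex^'n::finite^'n \<Rightarrow> complex poly" where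
  "charpoly M = det (\<chi> i j. (if i = j then [:0, 1:] else 0) - [:M $ i $ j:])"

text \<open>von Neumann entropy S_1(\<rho>) = - tr \<rho> log \<rho> = - \<Sum> \<lambda> log \<lambda> over the eigenvalues of \<rho>
  counted with (algebraic) multiplicity, with 0 log 0 = 0; natural logarithm.\<close>
definition vN_entropy :: "complex^'n::finite^'n \<Rightarrow> real" where
  "vN_entropy \<rho> = - (\<Sum>l\<in>{l. poly (charpoly \<rho>) l = 0}.
       real (order l (charpoly \<rho>)) * (Re l * ln (Re l)))"

definition h2 :: "real \<Rightarrow> real" where
  "h2 x = - x * ln x - (1 - x) * ln (1 - x)"

end

theory Submission
  imports Defs
begin


lemma braket_zero_left[simp]: "braket 0 v = 0" by (simp add: braket_def)
lemma braket_zero_right[simp]: "braket v 0 = 0" by (simp add: braket_def)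
lemma braket_add_right: "braket u (v + w) = braket u v + braket u w"
  by (simp add: braket_def distrib_left sum.distrib)
lemma braket_add_left: "braket (u + v) w = braket u w + braket v w"
  by (simp add: braket_def distrib_right sum.distrib)
lemma braket_diff_right: "braket u (v - w) = braket u v - braket u w"
  by (simp add: braket_def right_diff_distrib sum_subtractf)
lemma braket_diff_left: "braket (u - v) w = braket u w - braket v w"
  by (simp add: braket_def left_diff_distrib sum_subtractf)
lemma braket_smult_right: "braket u (c *s v) = c * braket u v"
  by (simp add: braket_def sum_distrib_left algebra_simps)
lemma braket_smult_left: "braket (c *s u) v = cnj c * braket u v"
  by (simp add: braket_def sum_distrib_left algebra_simps)
lemma braket_scaleR_right: "braket u (r *\<^sub>R v) = of_real r * braket u v"
  unfolding braket_def vector_scaleR_component by (simp add: sum_distrib_left algebra_simps scaleR_conv_of_real)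
lemma braket_scaleR_left: "braket (r *\<^sub>R u) v = of_real r * braket u v"
  unfolding braket_def vector_scaleR_component by (simp add: sum_distrib_left algebra_simps scaleR_conv_of_real)
lemma braket_sum_right: "braket u (\<Sum>i\<in>A. f i) = (\<Sum>i\<in>A. braket u (f i))"
  by (induct A rule: infinite_finite_induct) (simp_all add: braket_add_right)
lemma braket_sum_left: "braket (\<Sum>i\<in>A. f i) v = (\<Sum>i\<in>A. braket (f i) v)"
  by (induct A rule: infinite_finite_induct) (simp_all add: braket_add_left)
lemma braket_cnj: "cnj (braket u v) = braket v u"
  by (simp add: braket_def mult.commute)

lemma norm_vec_sq: "(norm (v::complex^'n))^2 = (\<Sum>i\<in>UNIV. (cmod (v$i))^2)"
  by (simp add: norm_vec_def L2_set_def sum_nonneg)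

lemma braket_self: "braket v v = of_real ((norm v)^2)"
proof -
  have "braket v v = (\<Sum>i\<in>UNIV. of_real ((cmod (v$i))^2))"
    unfolding braket_def by (intro sum.cong refl) (simp add: complex_norm_square mult.commute del: of_real_power)
  then show ?thesis by (simp add: norm_vec_sq)
qed

lemma Re_braket_self: "Re (braket v v) = (norm v)^2"
  by (simp add: braket_self)

lemma Re_braket_inner: "Re (braket u v) = inner u v"
  by (simp add: braket_def inner_vec_def Re_sum inner_complex_def)

definition herm :: "complex^'n^'n \<Rightarrow> bool" where
  "herm M \<longleftrightarrow> (\<forall>i j. M$i$j = cnj (M$j$i))"

lemma braket_herm:
  assumes "herm M" shows "braket (M *v u) v = braket u (M *v v)"
proof -
  have "braket (M *v u) v = (\<Sum>i\<in>UNIV. \<Sum>j\<in>UNIV. cnj (M$i$j) * cnj (u$j) * v$i)"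
    unfolding braket_def matrix_vector_mult_def by (simp add: sum_distrib_right)
  also have "\<dots> = (\<Sum>j\<in>UNIV. \<Sum>i\<in>UNIV. cnj (M$i$j) * cnj (u$j) * v$i)"
    by (rule sum.swap)
  also have "\<dots> = braket u (M *v v)"
    unfolding braket_def matrix_vector_mult_def
  proof (simp add: sum_distrib_left, intro sum.cong refl)
    fix i j
    have "cnj (M$i$j) = M$j$i" using assms unfolding herm_def by (metis complex_cnj_cnj)
    then show "cnj (M$i$j) * cnj (u$j) * v$i = cnj (u$j) * (M$j$i * v$i)" by simp
  qed
  finally show ?thesis .
qed



lemma closed_W: "closed {z::complex^'n. \<forall>i<k. braket (e i) z = 0}"
  unfolding braket_def
  by (intro closed_Collect_all closed_Collect_imp closed_Collect_eq continuous_intros) auto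

lemma cont_R: "continuous_on S (\<lambda>z::complex^'n. Re (braket z (M *v z)))"
  unfolding braket_def matrix_vector_mult_def
  by (intro continuous_intros)

lemma matvec_add: "M *v (u + v) = M *v u + M *v (v::complex^'n)"
  by (simp add: matrix_vector_right_distrib)
lemma matvec_smult: "M *v (c *s v) = c *s (M *v (v::complex^'n))"
  by (simp add: vec_eq_iff matrix_vector_mult_def sum_distrib_left algebra_simps)
lemma matvec_diff: "M *v (u - v) = M *v u - M *v (v::complex^'n)"
  by (simp add: vec_eq_iff matrix_vector_mult_def sum_subtractf algebra_simps)

lemma quad_nonneg_zero:
  fixes a q :: real
  assumes "\<And>t. 2 * t * a + t^2 * q \<ge> 0" "q \<ge> 0" "a \<ge> 0"
  shows "a = 0"
proof -
  define t where "t = -a/(q+1)"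
  have s: "t * (q+1) = -a" using assms(2) by (simp add: t_def)
  have "0 \<le> (q+1)^2 * (2 * t * a + t^2 * q)" using assms(1)[of t] by simp
  also have "\<dots> = 2 * (t*(q+1)) * a * (q+1) + (t*(q+1))^2 * q" by (simp add: algebra_simps power2_eq_square)
  also have "\<dots> = a^2 * (-q-2)" unfolding s by (simp add: algebra_simps power2_eq_square)
  finally have "a^2 * (-q-2) \<ge> 0" .
  show ?thesis
  proof (rule ccontr)
    assume "a \<noteq> 0"
    then have "a^2 > 0" by simp
    then have "a^2 * (q+2) > 0" using assms(2) by simp
    with \<open>a^2 * (-q-2) \<ge> 0\<close> show False by (simp add: algebra_simps)
  qed
qed

lemma matvec_scaleR: "M *v (r *\<^sub>R v) = r *\<^sub>R (M *v (v::complex^'n))"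
  unfolding vec_eq_iff matrix_vector_mult_def vector_scaleR_component
  by (simp add: sum_distrib_left algebra_simps scaleR_conv_of_real)

lemma exists_eigvec_in_W:
  fixes M :: "complex^'n^'n" and e :: "nat \<Rightarrow> complex^'n"
  assumes herm: "herm M" and eig: "\<forall>i<k. M *v e i = complex_of_real (l i) *s e i"
    and z0: "z0 \<noteq> 0" "\<forall>i<k. braket (e i) z0 = 0"
  shows "\<exists>x lam. (\<forall>i<k. braket (e i) x = 0) \<and> norm x = 1 \<and> M *v x = complex_of_real lam *s x"
proof -
  define W where "W = {z::complex^'n. \<forall>i<k. braket (e i) z = 0}"
  define R where "R = (\<lambda>z::complex^'n. Re (braket z (M *v z)))"
  define S where "S = sphere 0 1 \<inter> W"
  have W_add: "u + v \<in> W" if "u \<in> W" "v \<in> W" for u v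
    using that by (simp add: W_def braket_add_right)
  have W_diff: "u - v \<in> W" if "u \<in> W" "v \<in> W" for u v
    using that by (simp add: W_def braket_diff_right)
  have W_scale: "r *\<^sub>R u \<in> W" if "u \<in> W" for u r
    using that by (simp add: W_def braket_scaleR_right)
  have W_M: "M *v u \<in> W" if "u \<in> W" for u
  proof -
    have "braket (e i) (M *v u) = 0" if "i < k" for i
    proof -
      have "braket (e i) (M *v u) = braket (M *v e i) u" by (simp add: braket_herm[OF herm])
      also have "\<dots> = 0" using eig that \<open>u \<in> W\<close> by (simp add: W_def braket_smult_left)
      finally show ?thesis .
    qed
    then show ?thesis by (simp add: W_def)
  qed
  have "compact S" unfolding S_def W_def by (intro compact_Int_closed compact_sphere closed_W)
  moreover have "(1 / norm z0) *\<^sub>R z0 \<in> S"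
    using z0 by (simp add: S_def W_def braket_scaleR_right)
  then have "S \<noteq> {}" by blast
  moreover have "continuous_on S R" unfolding R_def by (rule cont_R)
  ultimately obtain x where xS: "x \<in> S" and xmax: "\<And>y. y \<in> S \<Longrightarrow> R y \<le> R x"
    using continuous_attains_sup by metis
  define lam where "lam = R x"
  have xW: "x \<in> W" and nx: "norm x = 1" using xS by (auto simp: S_def)
  have R_scale: "R (r *\<^sub>R z) = r^2 * R z" for r z
    by (simp add: R_def matvec_scaleR braket_scaleR_left braket_scaleR_right power2_eq_square)
  have claim1: "R z \<le> lam * (norm z)^2" if "z \<in> W" for z
  proof (cases "z = 0")
    case True then show ?thesis by (simp add: R_def)
  next
    case False
    have "(1 / norm z) *\<^sub>R z \<in> S" using False that by (simp add: S_def W_scale)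
    then have "R ((1 / norm z) *\<^sub>R z) \<le> lam" using xmax lam_def by blast
    then have "R z / (norm z)^2 \<le> lam" by (simp add: R_scale power_divide)
    then show ?thesis using False by (simp add: divide_le_eq mult.commute)
  qed
  define B where "B = (\<lambda>z::complex^'n. lam *\<^sub>R z - M *v z)"
  define Q where "Q = (\<lambda>z. Re (braket z (B z)))"
  have QR: "Q z = lam * (norm z)^2 - R z" for z
    by (simp add: Q_def B_def R_def braket_diff_right braket_scaleR_right Re_braket_self)
  have Qnn: "Q z \<ge> 0" if "z \<in> W" for z using claim1[OF that] QR by simp
  have Qx: "Q x = 0" using QR nx lam_def by simp
  define d where "d = B x"
  have dW: "d \<in> W" unfolding d_def B_def using xW by (intro W_diff W_scale W_M)
  have B_lin: "B (u + r *\<^sub>R v) = B u + r *\<^sub>R B v" for u v r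
    by (simp add: B_def matvec_add matvec_scaleR algebra_simps)
  have B_herm: "braket u (B v) = braket (B u) v" for u v
    by (simp add: B_def braket_diff_right braket_diff_left braket_scaleR_right braket_scaleR_left braket_herm[OF herm])
  have expand: "Q (x + t *\<^sub>R d) = 2 * t * (norm d)^2 + t^2 * Q d" for t
  proof -
    have "braket (x + t *\<^sub>R d) (B (x + t *\<^sub>R d)) =
      braket x (B x) + of_real t * braket x (B d) + of_real t * braket d (B x) + of_real t * of_real t * braket d (B d)"
      by (simp add: B_lin braket_add_left braket_add_right braket_scaleR_left braket_scaleR_right algebra_simps)
    also have "braket x (B d) = braket d d" using B_herm d_def by simp
    also have "braket d (B x) = braket d d" using d_def by simp
    finally have "Q (x + t *\<^sub>R d) = Q x + 2 * t * Re (braket d d) + t^2 * Q d"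
      by (simp add: Q_def power2_eq_square)
    then show ?thesis using Qx by (simp add: Re_braket_self)
  qed
  have "(norm d)^2 = 0"
  proof (rule quad_nonneg_zero)
    show "0 \<le> 2 * t * (norm d)\<^sup>2 + t\<^sup>2 * Q d" for t
      using Qnn[OF W_add[OF xW W_scale[OF dW]]] expand by simp
    show "Q d \<ge> 0" using Qnn[OF dW] .
  qed simp
  then have "d = 0" by simp
  then have "M *v x = complex_of_real lam *s x"
  proof -
    have "M *v x = lam *\<^sub>R x" using \<open>d = 0\<close> by (simp add: d_def B_def)
    then show ?thesis unfolding vec_eq_iff
      by (metis vector_scaleR_component vector_smult_component scaleR_conv_of_real)
  qed
  then show ?thesis using xW nx unfolding W_def by blast
qed



lemma exists_orth:
  fixes e :: "nat \<Rightarrow> complex^'n"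
  assumes "k < CARD('n)"
  shows "\<exists>z. z \<noteq> 0 \<and> (\<forall>i<k. braket (e i) z = 0)"
proof -
  define S where "S = e ` {..<k} \<union> (\<lambda>i. \<i> *s e i) ` {..<k}"
  have "finite S" by (simp add: S_def)
  have "card S \<le> card (e ` {..<k}) + card ((\<lambda>i. \<i> *s e i) ` {..<k})"
    unfolding S_def by (rule card_Un_le)
  also have "\<dots> \<le> k + k" by (intro add_mono card_image_le[of "{..<k}", simplified])
  finally have "dim S < DIM(complex^'n)" using assms dim_le_card'[OF \<open>finite S\<close>] by simp
  then obtain x where x: "x \<noteq> 0" "\<And>y. y \<in> span S \<Longrightarrow> orthogonal x y"
    by (rule orthogonal_to_subspace_exists) blast
  have "braket (e i) x = 0" if "i < k" for i
  proof -
    have "orthogonal x (e i)" "orthogonal x (\<i> *s e i)" using that x(2) by (auto simp: S_def intro: span_base)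
    then have "Re (braket (e i) x) = 0" "Re (braket (\<i> *s e i) x) = 0"
      by (auto simp: orthogonal_def Re_braket_inner inner_commute)
    then show ?thesis by (simp add: braket_smult_left complex_eq_iff)
  qed
  then show ?thesis using x(1) by blast
qed

lemma spectral_nat:
  fixes M :: "complex^'n^'n"
  assumes herm: "herm M"
  shows "k \<le> CARD('n) \<Longrightarrow> \<exists>e l. (\<forall>i<k. \<forall>j<k. braket (e i) (e j) = (if i = j then 1 else 0)) \<and>
     (\<forall>i<k. M *v e i = complex_of_real (l i) *s e i)"
proof (induct k)
  case 0 then show ?case by simp
next
  case (Suc k)
  then obtain e l where on: "\<forall>i<k. \<forall>j<k. braket (e i) (e j) = (if i = j then 1 else 0)"
    and eig: "\<forall>i<k. M *v e i = complex_of_real (l i) *s e i" by auto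
  obtain z0 where z0: "z0 \<noteq> 0" "\<forall>i<k. braket (e i) z0 = 0"
    using exists_orth[of k e] Suc(2) by auto
  obtain x lam where x: "\<forall>i<k. braket (e i) x = 0" "norm x = 1" "M *v x = complex_of_real lam *s x"
    using exists_eigvec_in_W[OF herm eig z0] by blast
  define e' where "e' = e(k := x)"
  define l' where "l' = l(k := lam)"
  have xx: "braket x x = 1" using x(2) by (simp add: braket_self)
  have xe: "braket x (e i) = 0" if "i < k" for i using x(1) that braket_cnj[of "e i" x] by auto
  have "\<forall>i<Suc k. \<forall>j<Suc k. braket (e' i) (e' j) = (if i = j then 1 else 0)"
    using on x(1) xx xe by (auto simp: e'_def less_Suc_eq)
  moreover have "\<forall>i<Suc k. M *v e' i = complex_of_real (l' i) *s e' i"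
    using eig x(3) by (auto simp: e'_def l'_def less_Suc_eq)
  ultimately show ?case by blast
qed

lemma spectral:
  fixes M :: "complex^'n^'n"
  assumes herm: "herm M"
  shows "\<exists>(e::'n \<Rightarrow> complex^'n) (l::'n \<Rightarrow> real). (\<forall>i j. braket (e i) (e j) = (if i = j then 1 else 0)) \<and>
     (\<forall>i. M *v e i = complex_of_real (l i) *s e i)"
proof -
  obtain e l where on: "\<forall>i<CARD('n). \<forall>j<CARD('n). braket (e i) (e j) = (if i = j then 1 else 0)"
    and eig: "\<forall>i<CARD('n). M *v e i = complex_of_real (l i) *s e i"
    using spectral_nat[OF herm, of "CARD('n)"] by auto
  obtain h :: "'n \<Rightarrow> nat" where h: "bij_betw h UNIV {0..<CARD('n)}"
    using ex_bij_betw_finite_nat[of "UNIV::'n set"] by auto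
  have hr: "h i < CARD('n)" for i using h by (auto simp: bij_betw_def)
  have hinj: "h i = h j \<longleftrightarrow> i = j" for i j using h by (auto simp: bij_betw_def inj_on_def)
  show ?thesis
    by (rule exI[of _ "\<lambda>i. e (h i)"], rule exI[of _ "\<lambda>i. l (h i)"]) (simp add: on eig hr hinj)
qed

lemma onb_complete:
  fixes e :: "'n \<Rightarrow> complex^'n"
  assumes on: "\<forall>i j. braket (e i) (e j) = (if i = j then 1 else 0)"
  shows "z = (\<Sum>i\<in>UNIV. braket (e i) z *s e i)"
proof (rule ccontr)
  assume ne: "z \<noteq> (\<Sum>i\<in>UNIV. braket (e i) z *s e i)"
  define r where "r = z - (\<Sum>i\<in>UNIV. braket (e i) z *s e i)"
  have r0: "r \<noteq> 0" using ne by (simp add: r_def)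
  have er: "braket (e j) r = 0" for j
  proof -
    have "braket (e j) r = braket (e j) z - (\<Sum>i\<in>UNIV. braket (e i) z * braket (e j) (e i))"
      by (simp add: r_def braket_diff_right braket_sum_right braket_smult_right)
    also have "(\<Sum>i\<in>UNIV. braket (e i) z * braket (e j) (e i)) = braket (e j) z"
    proof -
      have "(\<Sum>i\<in>UNIV. braket (e i) z * braket (e j) (e i)) = (\<Sum>i\<in>UNIV. if i = j then braket (e j) z else 0)"
        using on by (intro sum.cong refl) auto
      then show ?thesis by simp
    qed
    finally show ?thesis by simp
  qed
  define f where "f = (\<lambda>p. case p of None \<Rightarrow> r | Some i \<Rightarrow> e i)"
  have f_orth: "braket (f p) (f q) = 0" if "p \<noteq> q" for p q
    using that on er braket_cnj[of "e _" r] by (cases p; cases q) (auto simp: f_def)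
  have f_self: "braket (f p) (f p) \<noteq> 0" for p
    using on r0 by (cases p) (auto simp: f_def braket_self, metis braket_zero_left zero_neq_one)
  define g where "g = (\<lambda>(b::bool, p). (if b then \<i> else 1) *s f p)"
  have g_inner: "inner (g a) (g b) = Re (cnj (if fst a then \<i> else 1) * (if fst b then \<i> else 1) * braket (f (snd a)) (f (snd b)))" for a b
    by (cases a; cases b) (simp add: g_def Re_braket_inner[symmetric] braket_smult_left braket_smult_right mult.assoc)
  have g_orth: "inner (g a) (g b) = 0" if "a \<noteq> b" for a b
  proof (cases "snd a = snd b")
    case False then show ?thesis by (simp add: g_inner f_orth)
  next
    case True
    then have "fst a \<noteq> fst b" using that by (cases a; cases b) auto
    moreover have "braket (f (snd a)) (f (snd a)) = of_real ((norm (f (snd a)))^2)" by (rule braket_self)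
    ultimately show ?thesis using True by (cases "fst a"; cases "fst b") (auto simp: g_inner)
  qed
  have g_nz: "g a \<noteq> 0" for a
  proof
    assume "g a = 0"
    then have "inner (g a) (g a) = 0" by simp
    moreover have "inner (g a) (g a) = Re (braket (f (snd a)) (f (snd a)))"
      by (cases "fst a") (simp_all add: g_inner)
    moreover have "Re (braket (f (snd a)) (f (snd a))) \<noteq> 0"
      using f_self[of "snd a"] by (simp add: braket_self)
    ultimately show False by simp
  qed
  have inj: "inj g"
  proof (rule injI)
    fix a b assume "g a = g b"
    show "a = b"
    proof (rule ccontr)
      assume "a \<noteq> b"
      then have "inner (g a) (g a) = 0" using g_orth \<open>g a = g b\<close> by metis
      then show False using g_nz by simp
    qed
  qed
  have "independent (range g)"
    by (rule pairwise_orthogonal_independent) (auto simp: pairwise_def orthogonal_def g_nz intro: g_orth)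
  then have "card (range g) \<le> DIM(complex^'n)" using independent_bound by blast
  moreover have "card (range g) = 2 * (CARD('n) + 1)"
    using card_image[OF inj] by simp
  ultimately show False by simp
qed



lemma charpoly_eval: "poly (charpoly M) z = det (\<chi> i j. (if i = j then z else 0) - M$i$j)"
  unfolding charpoly_def det_def by (simp add: poly_sum poly_prod if_distrib[of "\<lambda>p. poly p z"] cong: if_cong)

lemma det_spectral:
  fixes M :: "complex^'n^'n" and e :: "'n \<Rightarrow> complex^'n"
  assumes on: "\<forall>i j. braket (e i) (e j) = (if i = j then 1 else 0)"
    and eig: "\<forall>i. M *v e i = complex_of_real (l i) *s e i"
  shows "det (\<chi> i j. (if i = j then z else 0) - M$i$j) = (\<Prod>i\<in>UNIV. z - of_real (l i))"
proof -
  define A where "A = (\<chi> i j. (if i = j then z else 0) - M$i$j)"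
  define U where "U = (\<chi> r c. e c $ r)"
  define Uh where "Uh = (\<chi> c r. cnj (e c $ r))"
  define D where "D = (\<chi> i j. if i = j then z - of_real (l i) else (0::complex))"
  have UhU: "Uh ** U = mat 1"
    using on by (simp add: vec_eq_iff matrix_matrix_mult_def Uh_def U_def mat_def braket_def)
  have eigc: "(\<Sum>k\<in>UNIV. M$r$k * e c $ k) = of_real (l c) * e c $ r" for r c
    using eig[rule_format, of c] by (simp add: vec_eq_iff matrix_vector_mult_def)
  have AU: "A ** U = U ** D"
  proof -
    have "(A ** U)$r$c = (U ** D)$r$c" for r c
    proof -
      have "(A ** U)$r$c = (\<Sum>k\<in>UNIV. (if r = k then z else 0) * e c $ k - M$r$k * e c $ k)"
        by (simp add: matrix_matrix_mult_def A_def U_def left_diff_distrib)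
      also have "\<dots> = z * e c $ r - of_real (l c) * e c $ r"
        by (simp add: sum_subtractf eigc if_distrib[of "\<lambda>x. x * _"] cong: if_cong)
      also have "\<dots> = (U ** D)$r$c"
        by (simp add: matrix_matrix_mult_def U_def D_def if_distrib[of "\<lambda>x. _ * x"] algebra_simps cong: if_cong)
      finally show ?thesis .
    qed
    then show ?thesis by (simp add: vec_eq_iff)
  qed
  have "det Uh * det A * det U = det (Uh ** (A ** U))" by (simp add: det_mul)
  also have "\<dots> = det ((Uh ** U) ** D)" by (simp add: AU matrix_mul_assoc)
  also have "\<dots> = det D" by (simp add: UhU)
  finally have 1: "det Uh * det A * det U = det D" .
  have "det Uh * det U = 1" using UhU det_mul[of Uh U] by simp
  then have "det A = det D" using 1 by (metis mult.commute mult.left_commute mult.right_neutral)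
  also have "det D = (\<Prod>i\<in>UNIV. z - of_real (l i))"
    by (subst det_diagonal) (auto simp: D_def)
  finally show ?thesis by (simp add: A_def)
qed

lemma charpoly_spectral:
  fixes M :: "complex^'n^'n" and e :: "'n \<Rightarrow> complex^'n"
  assumes on: "\<forall>i j. braket (e i) (e j) = (if i = j then 1 else 0)"
    and eig: "\<forall>i. M *v e i = complex_of_real (l i) *s e i"
  shows "charpoly M = (\<Prod>i\<in>UNIV. [:- of_real (l i), 1:])"
proof -
  have "poly (charpoly M) z = poly (\<Prod>i\<in>UNIV. [:- of_real (l i), 1:]) z" for z
    by (simp add: charpoly_eval det_spectral[OF on eig] poly_prod)
  then show ?thesis using poly_eq_poly_eq_iff by blast
qed

lemma order_linear_poly: fixes x a :: "'a::idom" shows "order x [:-a, 1:] = (if x = a then 1 else (0::nat))"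
proof (cases "x = a")
  case True then show ?thesis using order_power_n_n[of a 1] by simp
next
  case False
  then have "poly [:-a,1:] x \<noteq> 0" by simp
  then show ?thesis using False by (simp add: order_0I)
qed

lemma order_prod_linear:
  fixes c :: "'i \<Rightarrow> 'a::idom"
  assumes "finite A"
  shows "order x (\<Prod>i\<in>A. [:- c i, 1:]) = card {i\<in>A. c i = x}"
  using assms
proof (induct A rule: finite_induct)
  case empty then show ?case by simp
next
  case (insert j F)
  have nz: "[:- c j, 1:] * (\<Prod>i\<in>F. [:- c i, 1:]) \<noteq> 0"
    using insert.hyps(1) by (subst no_zero_divisors) (auto simp: prod_zero_iff)
  have "order x (\<Prod>i\<in>insert j F. [:- c i, 1:]) = order x ([:- c j, 1:] * (\<Prod>i\<in>F. [:- c i, 1:]))"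
    by (simp only: prod.insert[OF insert.hyps(1,2)])
  also have "\<dots> = order x [:- c j, 1:] + order x (\<Prod>i\<in>F. [:- c i, 1:])"
    by (rule order_mult[OF nz])
  also have "\<dots> = card {i\<in>insert j F. c i = x}"
  proof (cases "c j = x")
    case True
    then have "{i\<in>insert j F. c i = x} = insert j {i\<in>F. c i = x}" by auto
    then show ?thesis using insert.hyps True by (simp add: order_linear_poly)
  next
    case False
    then have "{i\<in>insert j F. c i = x} = {i\<in>F. c i = x}" by auto
    then show ?thesis using insert.hyps False by (simp add: order_linear_poly)
  qed
  finally show ?case .
qed



lemma vN_spectral:
  fixes M :: "complex^'n^'n" and e :: "'n \<Rightarrow> complex^'n"
  assumes on: "\<forall>i j. braket (e i) (e j) = (if i = j then 1 else 0)"
    and eig: "\<forall>i. M *v e i = complex_of_real (l i) *s e i"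
  shows "vN_entropy M = - (\<Sum>i\<in>UNIV. l i * ln (l i))"
proof -
  define c where "c = (\<lambda>i. complex_of_real (l i))"
  define g where "g = (\<lambda>x::complex. Re x * ln (Re x))"
  have cp: "charpoly M = (\<Prod>i\<in>UNIV. [:- c i, 1:])"
    unfolding c_def by (rule charpoly_spectral[OF on eig])
  have roots: "{x. poly (charpoly M) x = 0} = range c"
    unfolding cp by (auto simp: poly_prod prod_zero_iff)
  have "(\<Sum>x\<in>{x. poly (charpoly M) x = 0}. real (order x (charpoly M)) * g x)
      = (\<Sum>x\<in>range c. real (card {i\<in>UNIV. c i = x}) * g x)"
    unfolding roots by (intro sum.cong refl) (simp add: cp order_prod_linear)
  also have "\<dots> = (\<Sum>x\<in>range c. (\<Sum>i\<in>{i\<in>UNIV. c i = x}. g (c i)))"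
    by (intro sum.cong refl) simp
  also have "\<dots> = (\<Sum>i\<in>UNIV. g (c i))"
    by (rule sum.image_gen[symmetric]) simp
  finally show ?thesis unfolding vN_entropy_def g_def c_def by simp
qed



lemma tangent_F:
  fixes y t :: real
  assumes "y \<ge> 0" "t > 0"
  shows "- y * ln y \<le> - y * ln t + t - y"
proof (cases "y = 0")
  case True then show ?thesis using assms by simp
next
  case False
  then have y: "y > 0" using assms by simp
  have "ln (t / y) \<le> t / y - 1" using y assms by (intro ln_le_minus_one) simp
  then have "y * ln (t / y) \<le> y * (t / y - 1)" using y by (intro mult_left_mono) auto
  then have "y * (ln t - ln y) \<le> t - y" using y assms by (simp add: ln_div right_diff_distrib)
  then show ?thesis by (simp add: algebra_simps)
qed

lemma two_point_F:
  fixes p m mu :: real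
  assumes "0 \<le> p" "p \<le> 1" "0 \<le> m" "0 \<le> mu" "mu \<le> 1"
  shows "mu * (- m * ln m) \<le> - ((1-mu)*p + mu*m) * ln ((1-mu)*p + mu*m)"
proof -
  define t where "t = (1-mu)*p + mu*m"
  have t0: "t \<ge> 0" using assms by (simp add: t_def)
  show ?thesis
  proof (cases "t = 0")
    case True
    then have "mu * m = 0" using assms unfolding t_def
      by (smt (verit) mult_nonneg_nonneg)
    then have "mu * (- m * ln m) = 0" by (metis mult_minus_left mult_zero_left mult.assoc mult.left_commute)
    moreover have "- ((1-mu)*p + mu*m) * ln ((1-mu)*p + mu*m) = 0" using True by (simp add: t_def)
    ultimately show ?thesis by linarith
  next
    case False
    then have tp: "t > 0" using t0 by simp
    have Fp: "- p * ln p \<ge> 0"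
    proof (cases "p = 0")
      case False
      then have "ln p \<le> 0" using assms by simp
      then show ?thesis using assms by (simp add: mult_nonneg_nonpos)
    qed simp
    have "(1-mu) * (- p * ln p) \<le> (1-mu) * (- p * ln t + t - p)"
      using tangent_F[OF assms(1) tp] assms by (intro mult_left_mono) auto
    moreover have "mu * (- m * ln m) \<le> mu * (- m * ln t + t - m)"
      using tangent_F[OF assms(3) tp] assms by (intro mult_left_mono) auto
    moreover have "(1-mu) * (- p * ln t + t - p) + mu * (- m * ln t + t - m) = - t * ln t"
      by (simp add: t_def algebra_simps)
    moreover have "(1-mu) * (- p * ln p) \<ge> 0" using assms(5) by (intro mult_nonneg_nonneg[OF _ Fp]) simp
    ultimately show ?thesis unfolding t_def[symmetric] by linarith
  qed
qed

lemma jensen_F: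
  fixes D w :: "'i \<Rightarrow> real"
  assumes "finite I" "\<And>i. i \<in> I \<Longrightarrow> D i \<ge> 0" "sum D I = 1" "\<And>i. i \<in> I \<Longrightarrow> w i \<ge> 0"
  shows "(\<Sum>i\<in>I. D i * (- w i * ln (w i))) \<le> - (\<Sum>i\<in>I. D i * w i) * ln (\<Sum>i\<in>I. D i * w i)"
proof -
  define m where "m = (\<Sum>i\<in>I. D i * w i)"
  have m0: "m \<ge> 0" unfolding m_def using assms by (intro sum_nonneg) auto
  show ?thesis
  proof (cases "m = 0")
    case True
    then have "\<forall>i\<in>I. D i * w i = 0" using assms unfolding m_def
      by (subst sum_nonneg_eq_0_iff[symmetric]) auto
    then have "(\<Sum>i\<in>I. D i * (- w i * ln (w i))) = 0"
      by (intro sum.neutral) (metis mult_eq_0_iff mult_minus_left neg_0_equal_iff_equal mult.assoc)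
    then show ?thesis using True by (simp add: m_def)
  next
    case False
    then have mp: "m > 0" using m0 by simp
    have "(\<Sum>i\<in>I. D i * (- w i * ln (w i))) \<le> (\<Sum>i\<in>I. D i * (- w i * ln m + m - w i))"
      using assms tangent_F mp by (intro sum_mono mult_left_mono) auto
    also have "\<dots> = (\<Sum>i\<in>I. (- ln m) * (D i * w i) + m * D i - D i * w i)"
      by (intro sum.cong refl) (simp add: algebra_simps)
    also have "\<dots> = (- ln m) * (\<Sum>i\<in>I. D i * w i) + m * sum D I - (\<Sum>i\<in>I. D i * w i)"
      by (simp only: sum.distrib sum_subtractf sum_distrib_left)
    also have "\<dots> = - m * ln m + m * sum D I - m" by (simp add: m_def)
    also have "\<dots> = - m * ln m" using assms by simp
    finally show ?thesis by (simp add: m_def)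
  qed
qed

lemma gibbs_scalar:
  fixes Q b :: "'j \<Rightarrow> real"
  assumes "finite J" "\<And>j. j \<in> J \<Longrightarrow> Q j \<ge> 0" "\<And>j. j \<in> J \<Longrightarrow> b j \<ge> Q j"
    and "(\<Sum>j\<in>J. Q j / b j) \<le> 1"
  shows "sum Q J * ln (sum Q J) \<le> (\<Sum>j\<in>J. Q j * ln (b j))"
proof (cases "sum Q J = 0")
  case True
  then have "\<forall>j\<in>J. Q j = 0" using assms by (subst sum_nonneg_eq_0_iff[symmetric]) auto
  then show ?thesis using True by simp
next
  case False
  define T where "T = sum Q J"
  have T: "T > 0" using False assms unfolding T_def by (metis sum_nonneg order_le_less)
  have "(\<Sum>j\<in>J. Q j * (ln T - ln (b j))) \<le> (\<Sum>j\<in>J. Q j * (T / b j - 1))"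
  proof (intro sum_mono)
    fix j assume j: "j \<in> J"
    show "Q j * (ln T - ln (b j)) \<le> Q j * (T / b j - 1)"
    proof (cases "Q j = 0")
      case False
      then have "Q j > 0" using assms(2)[OF j] by linarith
      then have bj: "b j > 0" using assms(3)[OF j] by simp
      have "ln (T / b j) \<le> T / b j - 1" using T bj by (intro ln_le_minus_one) simp
      then have "ln T - ln (b j) \<le> T / b j - 1" using T bj by (simp add: ln_div)
      then show ?thesis using \<open>Q j > 0\<close> by (intro mult_left_mono) auto
    qed simp
  qed
  also have "\<dots> = T * (\<Sum>j\<in>J. Q j / b j) - T"
    by (simp add: algebra_simps sum_subtractf sum_distrib_left T_def)
  also have "\<dots> \<le> 0" using assms(4) T by (simp add: mult_le_cancel_left1)
  finally have "(\<Sum>j\<in>J. Q j * (ln T - ln (b j))) \<le> 0" .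
  moreover have "(\<Sum>j\<in>J. Q j * ln T) = T * ln T" by (simp add: T_def sum_distrib_right)
  ultimately show ?thesis
    by (simp add: T_def[symmetric] right_diff_distrib sum_subtractf)
qed



definition onb :: "('n \<Rightarrow> complex^'n) \<Rightarrow> bool" where
  "onb e \<longleftrightarrow> (\<forall>i j. braket (e i) (e j) = (if i = j then 1 else 0))"

lemma coef_onb:
  assumes "onb e" shows "braket (e j) (\<Sum>i\<in>UNIV. c i *s e i) = c j"
proof -
  have "braket (e j) (\<Sum>i\<in>UNIV. c i *s e i) = (\<Sum>i\<in>UNIV. braket (e j) (c i *s e i))"
    by (rule braket_sum_right)
  also have "\<dots> = (\<Sum>i\<in>UNIV. if i = j then c j else 0)"
    using assms unfolding onb_def by (intro sum.cong refl) (simp add: braket_sum_right braket_smult_right)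
  finally show ?thesis by simp
qed

lemma cmod_braket_swap: "cmod (braket u v) = cmod (braket v u)"
  by (metis braket_cnj complex_mod_cnj)

lemma braket_mult_cnj: "braket u v * braket v u = of_real ((cmod (braket u v))^2)"
  by (metis braket_cnj complex_norm_square)

lemma parseval:
  fixes e :: "'n \<Rightarrow> complex^'n"
  assumes "onb e" shows "(\<Sum>i\<in>UNIV. (cmod (braket (e i) z))^2) = (norm z)^2"
proof -
  have z: "z = (\<Sum>i\<in>UNIV. braket (e i) z *s e i)"
    using assms unfolding onb_def by (rule onb_complete)
  have "braket z z = (\<Sum>i\<in>UNIV. braket (e i) z * braket z (e i))"
    by (subst (2) z) (simp add: braket_sum_right braket_smult_right)
  also have "\<dots> = of_real (\<Sum>i\<in>UNIV. (cmod (braket (e i) z))^2)"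
    by (simp add: braket_mult_cnj)
  finally have "complex_of_real ((norm z)^2) = of_real (\<Sum>i\<in>UNIV. (cmod (braket (e i) z))^2)"
    by (simp only: braket_self)
  then show ?thesis by (metis of_real_eq_iff)
qed

lemma matvec_sum: "M *v (\<Sum>i\<in>A. f i) = (\<Sum>i\<in>A. M *v (f i :: complex^'n))"
  by (induct A rule: infinite_finite_induct) (simp_all add: matvec_add)

lemma quad_spectral:
  fixes M :: "complex^'n^'n" and e :: "'n \<Rightarrow> complex^'n"
  assumes on: "onb e" and eig: "\<forall>i. M *v e i = complex_of_real (l i) *s e i"
  shows "braket z (M *v z) = of_real (\<Sum>i\<in>UNIV. l i * (cmod (braket (e i) z))^2)"
proof -
  have z: "z = (\<Sum>i\<in>UNIV. braket (e i) z *s e i)"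
    using on unfolding onb_def by (rule onb_complete)
  have "M *v z = (\<Sum>i\<in>UNIV. (braket (e i) z * of_real (l i)) *s e i)"
    by (subst z) (simp add: matvec_sum matvec_smult eig)
  then have "braket z (M *v z) = (\<Sum>i\<in>UNIV. of_real (l i) * (braket (e i) z * braket z (e i)))"
    by (simp add: braket_sum_right braket_smult_right algebra_simps)
  also have "\<dots> = of_real (\<Sum>i\<in>UNIV. l i * (cmod (braket (e i) z))^2)"
    by (simp add: braket_mult_cnj)
  finally show ?thesis .
qed

lemma gibbs_vec:
  fixes M :: "complex^'n^'n" and e :: "'n \<Rightarrow> complex^'n"
  assumes on: "onb e" and eig: "\<forall>i. M *v e i = complex_of_real (b i) *s e i"
    and dom: "\<And>z. (cmod (braket v z))^2 \<le> Re (braket z (M *v z))"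
  shows "(\<Sum>j\<in>UNIV. (cmod (braket v (e j)))^2) * ln (\<Sum>j\<in>UNIV. (cmod (braket v (e j)))^2)
     \<le> (\<Sum>j\<in>UNIV. (cmod (braket v (e j)))^2 * ln (b j))"
proof (rule gibbs_scalar)
  define Q where "Q = (\<lambda>j. (cmod (braket v (e j)))^2)"
  have bQ: "b j \<ge> Q j" for j
  proof -
    have "braket (e j) (M *v e j) = of_real (b j)"
      using on eig unfolding onb_def by (simp add: braket_smult_right)
    then show ?thesis using dom[of "e j"] by (simp add: Q_def)
  qed
  then show "b j \<ge> (cmod (braket v (e j)))^2" for j by (simp add: Q_def)
  define beta where "beta = (\<lambda>j. braket (e j) v / of_real (b j))"
  define z where "z = (\<Sum>j\<in>UNIV. beta j *s e j)"
  define s where "s = (\<Sum>j\<in>UNIV. Q j / b j)"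
  have s0: "s \<ge> 0" unfolding s_def
  proof (intro sum_nonneg)
    fix j
    have "0 \<le> Q j" by (simp add: Q_def)
    moreover then have "0 \<le> b j" using bQ[of j] by linarith
    ultimately show "0 \<le> Q j / b j" by simp
  qed
  have ez: "braket (e j) z = beta j" for j unfolding z_def by (rule coef_onb[OF on])
  have "braket v z = (\<Sum>j\<in>UNIV. beta j * braket v (e j))"
    by (simp add: z_def braket_sum_right braket_smult_right)
  also have "\<dots> = (\<Sum>j\<in>UNIV. of_real (Q j / b j))"
  proof (intro sum.cong refl)
    fix j
    have "braket (e j) v * braket v (e j) = of_real (Q j)"
      by (simp add: braket_mult_cnj Q_def cmod_braket_swap[of v])
    then show "beta j * braket v (e j) = of_real (Q j / b j)"
      by (simp add: beta_def)
  qed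
  also have "\<dots> = of_real s" by (simp add: s_def)
  finally have vz: "braket v z = of_real s" .
  have "braket z (M *v z) = of_real (\<Sum>j\<in>UNIV. b j * (cmod (beta j))^2)"
    using quad_spectral[OF on eig] ez by simp
  also have "(\<Sum>j\<in>UNIV. b j * (cmod (beta j))^2) = s"
    unfolding s_def
  proof (intro sum.cong refl)
    fix j
    show "b j * (cmod (beta j))^2 = Q j / b j"
      by (cases "b j = 0") (simp_all add: beta_def Q_def norm_divide power_divide cmod_braket_swap[of v] power2_eq_square)
  qed
  finally have "Re (braket z (M *v z)) = s" by simp
  with dom[of z] vz have "s^2 \<le> s" by simp
  then show "(\<Sum>j\<in>UNIV. (cmod (braket v (e j)))^2 / b j) \<le> 1"
  proof -
    have "s \<le> 1"
    proof (rule ccontr)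
      assume "\<not> s \<le> 1"
      then have "s * 1 < s * s" by (intro mult_strict_left_mono) auto
      then show False using \<open>s^2 \<le> s\<close> by (simp add: power2_eq_square)
    qed
    then show ?thesis unfolding s_def Q_def .
  qed
qed simp_all



lemma braket_smult_self: "braket w (braket u w *s u) = of_real ((cmod (braket u w))^2)"
  by (simp add: braket_smult_right braket_mult_cnj)

lemma abstract_main:
  fixes rho omega :: "complex^'a^'a" and u :: "complex^'a" and ys :: "'b::finite \<Rightarrow> complex^'a" and mu :: real
  assumes hr: "herm rho" and ho: "herm omega"
    and rho_act: "\<And>w. rho *v w = braket u w *s u + (\<Sum>k\<in>UNIV. braket (ys k) w *s ys k)"
    and omega_act: "\<And>w. omega *v w = (1/mu) *\<^sub>R (\<Sum>k\<in>UNIV. braket (ys k) w *s ys k)"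
    and mu_def: "mu = (\<Sum>k\<in>UNIV. (norm (ys k))^2)" and mu_pos: "mu > 0"
    and tr: "(norm u)^2 + mu = 1"
  shows "mu * vN_entropy omega \<le> vN_entropy rho \<and> vN_entropy rho \<le> h2 mu + mu * vN_entropy omega"
proof -
  obtain e b where eon: "onb e" and eeig: "\<forall>j. rho *v e j = complex_of_real (b j) *s e j"
    using spectral[OF hr] unfolding onb_def by blast
  obtain f w where fon: "onb f" and feig: "\<forall>i. omega *v f i = complex_of_real (w i) *s f i"
    using spectral[OF ho] unfolding onb_def by blast
  define Y where "Y = (\<lambda>z. \<Sum>k\<in>UNIV. (cmod (braket (ys k) z))^2)"
  have Y0: "Y z \<ge> 0" for z unfolding Y_def by (intro sum_nonneg) simp
  have Qrho: "Re (braket z (rho *v z)) = (cmod (braket u z))^2 + Y z" for z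
    by (simp add: rho_act braket_add_right braket_sum_right braket_smult_self Y_def)
  have Qomega: "Re (braket z (omega *v z)) = Y z / mu" for z
    by (simp add: omega_act braket_scaleR_right braket_sum_right braket_smult_self Y_def)
  have Qomega2: "Re (braket z (omega *v z)) = (\<Sum>i\<in>UNIV. w i * (cmod (braket (f i) z))^2)" for z
    using quad_spectral[OF fon feig] by simp
  have ee: "braket (e j) (e j) = 1" for j using eon unfolding onb_def by simp
  have ff: "braket (f j) (f j) = 1" for j using fon unfolding onb_def by simp
  have ne: "norm (e j) = 1" for j using ee[of j] Re_braket_self[of "e j"] norm_ge_zero[of "e j"]
    by (simp add: power2_eq_1_iff)
  have nf: "norm (f j) = 1" for j using ff[of j] Re_braket_self[of "f j"] norm_ge_zero[of "f j"]
    by (simp add: power2_eq_1_iff)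
  have bdef: "b j = Re (braket (e j) (rho *v e j))" for j using eeig ee by (simp add: braket_smult_right)
  have wdef: "w i = Re (braket (f i) (omega *v f i))" for i using feig ff by (simp add: braket_smult_right)
  define q where "q = (\<lambda>j. (cmod (braket u (e j)))^2)"
  define D where "D = (\<lambda>i j. (cmod (braket (f i) (e j)))^2)"
  define m where "m = (\<lambda>j. \<Sum>i\<in>UNIV. D i j * w i)"
  have w0: "w i \<ge> 0" for i using wdef[of i] Qomega[of "f i"] Y0[of "f i"] mu_pos by simp
  have D0: "D i j \<ge> 0" for i j by (simp add: D_def)
  have q0: "q j \<ge> 0" for j by (simp add: q_def)
  have Dcol: "(\<Sum>i\<in>UNIV. D i j) = 1" for j
    using parseval[OF fon, of "e j"] ne by (simp add: D_def)
  have Drow: "(\<Sum>j\<in>UNIV. D i j) = 1" for i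
    using parseval[OF eon, of "f i"] nf by (simp add: D_def cmod_braket_swap[of "f i"])
  have qsum: "(\<Sum>j\<in>UNIV. q j) = 1 - mu"
    using parseval[OF eon, of u] tr by (simp add: q_def cmod_braket_swap[of u])
  have Ymu: "Y z = mu * (\<Sum>i\<in>UNIV. w i * (cmod (braket (f i) z))^2)" for z
    using Qomega[of z] Qomega2[of z] mu_pos by (simp add: field_simps)
  have bq: "b j = q j + mu * m j" for j
    using bdef[of j] Qrho[of "e j"] Ymu[of "e j"]
    by (simp add: q_def m_def D_def mult.commute)
  have wsum: "(\<Sum>i\<in>UNIV. w i) = 1"
  proof -
    have "mu * (\<Sum>i\<in>UNIV. w i) = (\<Sum>i\<in>UNIV. Y (f i))"
      using wdef Qomega mu_pos by (simp add: sum_distrib_left)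
    also have "\<dots> = (\<Sum>k\<in>UNIV. \<Sum>i\<in>UNIV. (cmod (braket (f i) (ys k)))^2)"
      unfolding Y_def by (subst sum.swap) (simp add: cmod_braket_swap[of "ys _"])
    also have "\<dots> = mu" using parseval[OF fon] mu_def by simp
    finally show ?thesis using mu_pos by simp
  qed
  have mu1: "mu \<le> 1" using tr by (smt (verit) zero_le_power2)
  have Srho: "vN_entropy rho = - (\<Sum>j\<in>UNIV. b j * ln (b j))"
    using vN_spectral[OF eon[unfolded onb_def] eeig] .
  have Somega: "vN_entropy omega = - (\<Sum>i\<in>UNIV. w i * ln (w i))"
    using vN_spectral[OF fon[unfolded onb_def] feig] .
  have lower: "mu * vN_entropy omega \<le> vN_entropy rho"
  proof -
    have step: "mu * (\<Sum>i\<in>UNIV. D i j * (- w i * ln (w i))) \<le> - b j * ln (b j)" for j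
    proof -
      define p where "p = (if mu < 1 then q j / (1 - mu) else 0)"
      have qle: "q j \<le> 1 - mu" using qsum q0 member_le_sum[of j UNIV q] by simp
      have qp: "q j = (1 - mu) * p" and p0: "0 \<le> p" and p1: "p \<le> 1"
        using qle q0[of j] mu1 by (auto simp: p_def field_simps)
      have m0: "m j \<ge> 0" unfolding m_def using D0 w0 by (intro sum_nonneg mult_nonneg_nonneg)
      have "(\<Sum>i\<in>UNIV. D i j * (- w i * ln (w i))) \<le> - m j * ln (m j)"
        unfolding m_def using jensen_F[of UNIV "\<lambda>i. D i j" w] D0 Dcol w0 by simp
      then have "mu * (\<Sum>i\<in>UNIV. D i j * (- w i * ln (w i))) \<le> mu * (- m j * ln (m j))"
        using mu_pos by (intro mult_left_mono) auto
      also have "\<dots> \<le> - ((1-mu)*p + mu*m j) * ln ((1-mu)*p + mu*m j)"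
        by (rule two_point_F[OF p0 p1 m0 _ mu1]) (use mu_pos in simp)
      also have "(1-mu)*p + mu*m j = b j" using bq[of j] qp by simp
      finally show ?thesis .
    qed
    have "mu * vN_entropy omega = mu * (\<Sum>i\<in>UNIV. (\<Sum>j\<in>UNIV. D i j) * (- w i * ln (w i)))"
      using Somega Drow by (simp add: sum_negf)
    also have "(\<Sum>i\<in>UNIV. (\<Sum>j\<in>UNIV. D i j) * (- w i * ln (w i))) = (\<Sum>i\<in>UNIV. \<Sum>j\<in>UNIV. D i j * (- w i * ln (w i)))"
      by (simp only: sum_distrib_right)
    also have "\<dots> = (\<Sum>j\<in>UNIV. \<Sum>i\<in>UNIV. D i j * (- w i * ln (w i)))"
      by (rule sum.swap)
    also have "mu * \<dots> = (\<Sum>j\<in>UNIV. mu * (\<Sum>i\<in>UNIV. D i j * (- w i * ln (w i))))"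
      by (rule sum_distrib_left)
    also have "\<dots> \<le> (\<Sum>j\<in>UNIV. - b j * ln (b j))"
      by (intro sum_mono step)
    also have "\<dots> = vN_entropy rho" using Srho by (simp add: sum_negf)
    finally show ?thesis .
  qed
  have upper: "vN_entropy rho \<le> h2 mu + mu * vN_entropy omega"
  proof -
    have g1: "(1 - mu) * ln (1 - mu) \<le> (\<Sum>j\<in>UNIV. q j * ln (b j))"
    proof -
      have "(\<Sum>j\<in>UNIV. q j) * ln (\<Sum>j\<in>UNIV. q j) \<le> (\<Sum>j\<in>UNIV. q j * ln (b j))"
        unfolding q_def
      proof (rule gibbs_vec[OF eon eeig])
        show "(cmod (braket u z))^2 \<le> Re (braket z (rho *v z))" for z using Qrho Y0 by simp
      qed
      then show ?thesis using qsum by simp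
    qed
    have g2: "(mu * w i) * ln (mu * w i) \<le> (\<Sum>j\<in>UNIV. mu * w i * D i j * ln (b j))" for i
    proof -
      define v where "v = sqrt (mu * w i) *\<^sub>R f i"
      have mw: "mu * w i \<ge> 0" using mu_pos w0 by simp
      have cv: "(cmod (braket v z))^2 = mu * w i * (cmod (braket (f i) z))^2" for z
        using mw by (simp add: v_def braket_scaleR_left norm_mult power_mult_distrib)
      have "(\<Sum>j\<in>UNIV. (cmod (braket v (e j)))^2) * ln (\<Sum>j\<in>UNIV. (cmod (braket v (e j)))^2)
         \<le> (\<Sum>j\<in>UNIV. (cmod (braket v (e j)))^2 * ln (b j))"
      proof (rule gibbs_vec[OF eon eeig])
        fix z
        have "mu * w i * (cmod (braket (f i) z))^2 \<le> mu * (\<Sum>i'\<in>UNIV. w i' * (cmod (braket (f i') z))^2)"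
          using mu_pos w0 by (simp add: mult.assoc, intro member_le_sum mult_nonneg_nonneg) auto
        then show "(cmod (braket v z))^2 \<le> Re (braket z (rho *v z))"
          using cv Qrho[of z] Ymu[of z] by (smt (verit) zero_le_power2)
      qed
      then show ?thesis
        using cv Drow[of i] by (simp add: D_def sum_distrib_left[symmetric] mult.assoc)
    qed
    have split: "(\<Sum>j\<in>UNIV. b j * ln (b j)) = (\<Sum>j\<in>UNIV. q j * ln (b j)) + (\<Sum>i\<in>UNIV. \<Sum>j\<in>UNIV. mu * w i * D i j * ln (b j))"
    proof -
      have "(\<Sum>j\<in>UNIV. b j * ln (b j)) = (\<Sum>j\<in>UNIV. q j * ln (b j) + (\<Sum>i\<in>UNIV. mu * w i * D i j * ln (b j)))"
        by (intro sum.cong refl) (simp add: bq m_def distrib_right sum_distrib_left sum_distrib_right algebra_simps)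
      also have "\<dots> = (\<Sum>j\<in>UNIV. q j * ln (b j)) + (\<Sum>i\<in>UNIV. \<Sum>j\<in>UNIV. mu * w i * D i j * ln (b j))"
        by (simp only: sum.distrib sum.swap[of "\<lambda>j i. mu * w i * D i j * ln (b j)"])
      finally show ?thesis .
    qed
    have g3: "(\<Sum>i\<in>UNIV. (mu * w i) * ln (mu * w i)) = mu * ln mu + mu * (\<Sum>i\<in>UNIV. w i * ln (w i))"
    proof -
      have "(\<Sum>i\<in>UNIV. (mu * w i) * ln (mu * w i)) = (\<Sum>i\<in>UNIV. mu * ln mu * w i + mu * (w i * ln (w i)))"
      proof (intro sum.cong refl)
        fix i
        show "(mu * w i) * ln (mu * w i) = mu * ln mu * w i + mu * (w i * ln (w i))"
        proof (cases "w i = 0")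
          case False
          then have "w i > 0" using w0[of i] by simp
          then show ?thesis using mu_pos by (simp add: ln_mult algebra_simps)
        qed simp
      qed
      also have "\<dots> = mu * ln mu * (\<Sum>i\<in>UNIV. w i) + mu * (\<Sum>i\<in>UNIV. w i * ln (w i))"
        by (simp add: sum.distrib sum_distrib_left)
      finally show ?thesis using wsum by simp
    qed
    have "(1 - mu) * ln (1 - mu) + (\<Sum>i\<in>UNIV. (mu * w i) * ln (mu * w i)) \<le> (\<Sum>j\<in>UNIV. b j * ln (b j))"
    proof -
      have "(\<Sum>i\<in>UNIV. (mu * w i) * ln (mu * w i)) \<le> (\<Sum>i\<in>UNIV. \<Sum>j\<in>UNIV. mu * w i * D i j * ln (b j))"
        by (rule sum_mono[OF g2])
      then show ?thesis unfolding split using g1 by linarith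
    qed
    then show ?thesis using Srho Somega g3 unfolding h2_def by simp
  qed
  show ?thesis using lower upper by simp
qed



lemma sum_UNIV_prod: "(\<Sum>p\<in>(UNIV::('a::finite \<times> 'b::finite) set). g p) = (\<Sum>i\<in>UNIV. \<Sum>j\<in>UNIV. g (i, j))"
  by (simp add: sum.cartesian_product)

lemma braket_tens: "braket (tens a b) (tens c d) = braket a c * braket b d"
  unfolding braket_def tens_def
  by (simp add: sum_UNIV_prod sum_product algebra_simps)

lemma braket_tens_left: "braket (tens a b) v = braket a (contractB b v)"
  unfolding braket_def tens_def contractB_def
  by (simp add: sum_UNIV_prod sum_distrib_left algebra_simps)

lemma contractB_tens: "contractB b (tens x b') = braket b b' *s x"
  unfolding braket_def tens_def contractB_def
  by (simp add: vec_eq_iff sum_distrib_left algebra_simps)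

lemma contractB_diff: "contractB b (v - w) = contractB b v - contractB b w"
  unfolding contractB_def by (simp add: vec_eq_iff right_diff_distrib sum_subtractf)

lemma contractB_scaleR: "contractB b (r *\<^sub>R v) = r *\<^sub>R contractB b v"
  unfolding contractB_def vec_eq_iff vector_scaleR_component by (simp add: sum_distrib_left scaleR_conv_of_real algebra_simps)

lemma tens_add_left: "tens (a + c) b = tens a b + tens c b"
  unfolding tens_def by (simp add: vec_eq_iff distrib_right)

lemma tens_scaleR_left: "tens (r *\<^sub>R a) b = r *\<^sub>R tens a b"
  unfolding tens_def vec_eq_iff vector_scaleR_component by (simp add: scaleR_conv_of_real)

definition Gm :: "('b::finite \<Rightarrow> complex^'a::finite) \<Rightarrow> complex^'a^'a" where
  "Gm ys = (\<chi> i i'. \<Sum>k\<in>UNIV. ys k $ i * cnj (ys k $ i'))"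

lemma outer_act: "outer v v *v w = braket v w *s v"
  unfolding outer_def braket_def by (simp add: vec_eq_iff matrix_vector_mult_def sum_distrib_left algebra_simps)

lemma Gm_act: "Gm ys *v w = (\<Sum>k\<in>UNIV. braket (ys k) w *s ys k)"
proof -
  have "(Gm ys *v w) $ i = (\<Sum>k\<in>UNIV. braket (ys k) w *s ys k) $ i" for i
  proof -
    have "(Gm ys *v w) $ i = (\<Sum>i'\<in>UNIV. \<Sum>k\<in>UNIV. ys k $ i * cnj (ys k $ i') * w $ i')"
      unfolding Gm_def matrix_vector_mult_def by (simp add: sum_distrib_right)
    also have "\<dots> = (\<Sum>k\<in>UNIV. \<Sum>i'\<in>UNIV. ys k $ i * cnj (ys k $ i') * w $ i')"
      by (rule sum.swap)
    also have "\<dots> = (\<Sum>k\<in>UNIV. braket (ys k) w * ys k $ i)"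
      unfolding braket_def by (simp add: sum_distrib_left sum_distrib_right mult.assoc mult.commute mult.left_commute)
    also have "\<dots> = (\<Sum>k\<in>UNIV. braket (ys k) w *s ys k) $ i" by simp
    finally show ?thesis .
  qed
  then show ?thesis by (simp add: vec_eq_iff)
qed

lemma herm_outer: "herm (outer v v)" unfolding herm_def outer_def by simp
lemma herm_Gm: "herm (Gm ys)" unfolding herm_def Gm_def by (simp add: mult.commute)
lemma herm_add: "herm A \<Longrightarrow> herm B \<Longrightarrow> herm (A + B)" unfolding herm_def by (metis vector_add_component complex_cnj_add)
lemma herm_scaleR: "herm A \<Longrightarrow> herm (r *\<^sub>R A)" unfolding herm_def vector_scaleR_component by (metis complex_cnj_scaleR)

lemma matvec_scaleR_mat: "(r *\<^sub>R A) *v w = r *\<^sub>R (A *v (w::complex^'n))"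
  unfolding matrix_vector_mult_def vec_eq_iff vector_scaleR_component by (simp add: scaleR_conv_of_real sum_distrib_left algebra_simps)

lemma ptrB_split:
  fixes v :: "complex^'a::finite" and b :: "complex^'b::finite" and Y :: "complex^('a \<times> 'b)"
  assumes "contractB b Y = 0" "braket b b = 1"
  shows "ptrB (outer (tens v b + Y) (tens v b + Y)) = outer v v + Gm (\<lambda>k. \<chi> i. Y $ (i, k))"
proof -
  have c0: "(\<Sum>j\<in>UNIV. cnj (b $ j) * Y $ (i, j)) = 0" for i
    using assms(1) unfolding contractB_def by (simp add: vec_eq_iff)
  have c0': "(\<Sum>j\<in>UNIV. b $ j * cnj (Y $ (i, j))) = 0" for i
    using arg_cong[OF c0[of i], of cnj] by (simp add: cnj_sum)
  have bb: "(\<Sum>j\<in>UNIV. b $ j * cnj (b $ j)) = 1"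
    using arg_cong[OF assms(2), of cnj] unfolding braket_def by (simp add: cnj_sum mult.commute)
  have "(\<Sum>j\<in>UNIV. (v$i * b$j + Y$(i,j)) * cnj (v$i' * b$j + Y$(i',j))) =
        v$i * cnj (v$i') * (\<Sum>j\<in>UNIV. b $ j * cnj (b $ j))
        + v$i * (\<Sum>j\<in>UNIV. b $ j * cnj (Y $ (i', j)))
        + cnj (v$i') * cnj (\<Sum>j\<in>UNIV. b $ j * cnj (Y $ (i, j)))
        + (\<Sum>j\<in>UNIV. Y$(i,j) * cnj (Y$(i',j)))" for i i'
    by (simp add: cnj_sum sum.distrib sum_distrib_left algebra_simps)
  then show ?thesis
    unfolding ptrB_def outer_def Gm_def tens_def
    by (simp add: vec_eq_iff c0' bb)
qed


theorem mainTheorem2: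
  fixes a0 :: "complex^'a" and b0 :: "complex^'b" and phi :: "complex^('a \<times> 'b)"
    and eps :: real
  assumes "norm a0 = 1" and "norm b0 = 1" and "norm phi = 1"
    and "0 < eps" and "eps < 1"
  defines "x \<equiv> contractB b0 phi"
  defines "y \<equiv> phi - tens x b0"
  defines "N \<equiv> 1 + eps\<^sup>2 + 2 * eps * Re (braket (tens a0 b0) phi)"
  defines "psi \<equiv> (1 / sqrt N) *\<^sub>R (tens a0 b0 + eps *\<^sub>R phi)"
  defines "rhoA \<equiv> ptrB (outer psi psi)"
  defines "mu \<equiv> eps\<^sup>2 * Re (braket y y) / N"
  defines "omega \<equiv> (1 / Re (braket y y)) *\<^sub>R ptrB (outer y y)"
  assumes "y \<noteq> 0"
  shows "mu * vN_entropy omega \<le> vN_entropy rhoA \<and>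
         vN_entropy rhoA \<le> h2 mu + mu * vN_entropy omega"
proof -
  have aa: "braket a0 a0 = 1" using assms(1) by (simp add: braket_self)
  have bb: "braket b0 b0 = 1" using assms(2) by (simp add: braket_self)
  have pp: "braket phi phi = 1" using assms(3) by (simp add: braket_self)
  define t where "t = tens a0 b0"
  have tt: "braket t t = 1" by (simp add: t_def braket_tens aa bb)
  have nt: "norm t = 1" using tt Re_braket_self[of t] norm_ge_zero[of t] by (simp add: power2_eq_1_iff)
  have cy: "contractB b0 y = 0"
    by (simp add: y_def x_def contractB_diff contractB_tens bb)
  define u where "u = a0 + eps *\<^sub>R x"
  have phi_split: "phi = tens x b0 + y" by (simp add: y_def)
  have vec_eq: "t + eps *\<^sub>R phi = tens u b0 + eps *\<^sub>R y"
    by (simp add: t_def u_def phi_split tens_add_left tens_scaleR_left scaleR_add_right)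
  have N_norm: "N = (norm (t + eps *\<^sub>R phi))^2"
  proof -
    have "braket (t + eps *\<^sub>R phi) (t + eps *\<^sub>R phi) = braket t t + of_real eps * braket t phi + of_real eps * braket phi t + of_real eps * of_real eps * braket phi phi"
      by (simp add: braket_add_left braket_add_right braket_scaleR_left braket_scaleR_right algebra_simps)
    moreover have "Re (braket phi t) = Re (braket t phi)"
    proof -
      have "braket phi t = cnj (braket t phi)" by (simp add: braket_cnj)
      then show ?thesis by simp
    qed
    ultimately have "Re (braket (t + eps *\<^sub>R phi) (t + eps *\<^sub>R phi)) = N"
      by (simp add: tt pp N_def t_def[symmetric] power2_eq_square)
    then show ?thesis by (simp add: Re_braket_self)
  qed
  have Npos: "N > 0"
  proof (rule ccontr)
    assume "\<not> N > 0"
    then have "N = 0" using N_norm by (smt (verit) zero_le_power2)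
    then have "t + eps *\<^sub>R phi = 0" using N_norm by simp
    then have "t = - (eps *\<^sub>R phi)" by (simp add: add_eq_0_iff2)
    then have "norm t = eps" using assms(3,4) by simp
    then show False using nt assms(5) by simp
  qed
  have N_uy: "N = (norm u)^2 + eps^2 * (norm y)^2"
  proof -
    have cross: "braket (tens u b0) y = 0" by (simp add: braket_tens_left cy)
    have cross': "braket y (tens u b0) = 0" using cross braket_cnj[of "tens u b0" y] by simp
    have "braket (tens u b0 + eps *\<^sub>R y) (tens u b0 + eps *\<^sub>R y) = braket (tens u b0) (tens u b0) + of_real eps * of_real eps * braket y y"
      by (simp add: braket_add_left braket_add_right braket_scaleR_left braket_scaleR_right cross cross')
    moreover have "braket (tens u b0) (tens u b0) = braket u u" by (simp add: braket_tens bb)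
    ultimately have "Re (braket (tens u b0 + eps *\<^sub>R y) (tens u b0 + eps *\<^sub>R y)) = (norm u)^2 + eps^2 * (norm y)^2"
      by (simp add: Re_braket_self power2_eq_square)
    then show ?thesis using N_norm vec_eq by (simp add: Re_braket_self)
  qed
  define sN where "sN = sqrt N"
  have sN: "sN > 0" "sN^2 = N" using Npos by (simp_all add: sN_def)
  define u' where "u' = (1 / sN) *\<^sub>R u"
  define Y where "Y = (eps / sN) *\<^sub>R y"
  define ys where "ys = (\<lambda>k. \<chi> i. Y $ (i, k))"
  have psi_eq: "psi = tens u' b0 + Y"
    unfolding psi_def sN_def[symmetric] t_def[symmetric] vec_eq
    by (simp add: u'_def Y_def tens_scaleR_left scaleR_add_right)
  have cY: "contractB b0 Y = 0" by (simp add: Y_def contractB_scaleR cy)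
  have rho_eq: "rhoA = outer u' u' + Gm ys"
    unfolding rhoA_def psi_eq ys_def by (rule ptrB_split[OF cY bb])
  have ny: "(norm y)^2 > 0" using assms(13) by simp
  have Ryy: "Re (braket y y) = (norm y)^2" by (rule Re_braket_self)
  have ptr_y: "ptrB (outer y y) = Gm (\<lambda>k. \<chi> i. y $ (i, k))"
    unfolding ptrB_def outer_def Gm_def by simp
  have Gm_ys: "Gm ys = (eps / sN)^2 *\<^sub>R Gm (\<lambda>k. \<chi> i. y $ (i, k))"
    unfolding Gm_def ys_def Y_def vec_eq_iff vector_scaleR_component
    by (simp add: scaleR_conv_of_real sum_distrib_left power2_eq_square algebra_simps)
  have mu_val: "mu = eps^2 * (norm y)^2 / N" by (simp add: mu_def Ryy)
  have mu_pos: "mu > 0" using mu_val ny Npos assms(4) by simp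
  have omega_eq: "omega = (1/mu) *\<^sub>R Gm ys"
  proof -
    have "(1/mu) * (eps / sN)^2 = 1 / Re (braket y y)"
      using sN assms(4) ny Npos by (simp add: mu_val Ryy power_divide field_simps)
    then show ?thesis by (simp add: omega_def ptr_y Gm_ys)
  qed
  have norm_ys: "(\<Sum>k\<in>UNIV. (norm (ys k))^2) = (norm Y)^2"
    by (simp add: norm_vec_sq ys_def sum_UNIV_prod) (rule sum.swap)
  have mu_eq: "mu = (\<Sum>k\<in>UNIV. (norm (ys k))^2)"
    unfolding norm_ys using sN assms(4) by (simp add: Y_def mu_val power_mult_distrib power_divide abs_of_pos)
  have tr: "(norm u')^2 + mu = 1"
  proof -
    have "(norm u')^2 = (norm u)^2 / N" using sN by (simp add: u'_def power_mult_distrib power_divide)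
    then have "(norm u')^2 + mu = ((norm u)^2 + eps^2 * (norm y)^2) / N" by (simp add: mu_val add_divide_distrib)
    then show ?thesis using Npos N_uy by simp
  qed
  show ?thesis
  proof (rule abstract_main)
    show "herm rhoA" unfolding rho_eq by (intro herm_add herm_outer herm_Gm)
    show "herm omega" unfolding omega_eq by (intro herm_scaleR herm_Gm)
    show "rhoA *v w = braket u' w *s u' + (\<Sum>k\<in>UNIV. braket (ys k) w *s ys k)" for w
      unfolding rho_eq by (simp add: matrix_vector_mult_add_rdistrib outer_act Gm_act)
    show "omega *v w = (1/mu) *\<^sub>R (\<Sum>k\<in>UNIV. braket (ys k) w *s ys k)" for w
      unfolding omega_eq by (simp add: matvec_scaleR_mat Gm_act)
  qed (fact mu_eq, fact mu_pos, fact tr)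
qed

end
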